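(* Let $n$ be a positive integer such that $2^n-1\geq 7$ is a prime. Then for every $a\in\mathbb{F}_2$ there exists a primitive element $\alpha\in\mathbb{F}_{2^n}$ such that $\alpha+\alpha^{-1}$ is also primitive and $\mathrm{Tr}_{\mathbb{F}_{2^n}|\mathbb{F}_2}(\alpha)=a$.
   Context: A primitive element of $\mathbb{F}_{2^n}$ is a generator of $\mathbb{F}_{2^n}^*$. $\mathrm{Tr}_{\mathbb{F}_{2^n}|\mathbb{F}_2}(\alpha)=\alpha+\alpha^2+\cdots+\alpha^{2^{n-1}}$. *)

theory Defs
  imports Main "HOL-Computational_Algebra.Primes" "HOL-Library.Cardinality"
begin

definition primitive_element :: "'a::{field,finite} \<Rightarrow> bool" where
  "primitive_element \<alpha> \<longleftrightarrow> \<alpha> \<noteq> 0 \<and> (\<forall>x. x \<noteq> 0 \<longrightarrow> (\<exists>k::nat. x = \<alpha> ^ k))"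

definition trace2 :: "nat \<Rightarrow> 'a::field \<Rightarrow> 'a" where
  "trace2 n \<alpha> = (\<Sum>i<n. \<alpha> ^ (2 ^ i))"

end

theory Submission
  imports Defs "HOL-Computational_Algebra.Polynomial"
begin

lemma fermat_field:
  fixes x :: "'a::{field,finite}"
  assumes "x \<noteq> 0"
  shows "x ^ (CARD('a) - 1) = 1"
proof -
  let ?S = "UNIV - {0::'a}"
  have bij: "bij_betw (\<lambda>y. x*y) ?S ?S"
  proof (rule bij_betwI')
    fix y assume "y \<in> ?S"
    then show "\<exists>z \<in> ?S. y = x * z" using assms by (intro bexI[of _ "y / x"]) auto
  qed (use assms in auto)
  have "prod (\<lambda>y. x*y) ?S = prod id ?S"
    using prod.reindex_bij_betw[OF bij, of id] by simp
  moreover have "prod (\<lambda>y. x*y) ?S = x ^ card ?S * prod id ?S"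
    by (simp add: prod.distrib)
  moreover have "card ?S = CARD('a) - 1"
    by (simp add: card_Diff_subset)
  moreover have "prod id ?S \<noteq> 0" by simp
  ultimately show ?thesis by (metis mult_cancel_right1)
qed

lemma pow_ne_one:
  fixes x :: "'a::field"
  assumes "x ^ p = 1" "prime p" "x \<noteq> 1" "0 < m" "m < p"
  shows "x ^ m \<noteq> 1"
proof
  assume xm: "x ^ m = 1"
  have "\<not> p dvd m" using assms(4,5) by (auto dest: dvd_imp_le)
  then have "coprime p m" using assms(2) by (simp add: prime_imp_coprime)
  then have g: "gcd m p = 1" by (simp add: coprime_iff_gcd_eq_1 gcd.commute)
  obtain u v where uv: "m * u = p * v + gcd m p" using bezout_nat[of m p] assms(4) by auto
  have "x ^ (m * u) = 1" by (simp add: power_mult xm)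
  moreover have "x ^ (p * v + 1) = x" by (simp add: power_add power_mult assms(1))
  ultimately show False using uv g assms(3) by simp
qed

lemma primitive_prime:
  fixes x :: "'a::{field,finite}"
  assumes "prime (CARD('a) - 1)" "x \<noteq> 0" "x \<noteq> 1"
  shows "primitive_element x"
proof -
  define p where "p = CARD('a) - 1"
  have xp: "x ^ p = 1" using fermat_field assms(2) p_def by blast
  have pp: "prime p" using assms(1) p_def by simp
  have inj: "inj_on (\<lambda>k. x ^ k) {..<p}"
  proof (rule inj_onI)
    fix i j assume ij: "i \<in> {..<p}" "j \<in> {..<p}" "x ^ i = x ^ j"
    show "i = j"
    proof (rule ccontr)
      assume "i \<noteq> j"
      then consider "i < j" | "j < i" by linarith
      then show False
      proof cases
        case 1
        have "x ^ j = x ^ i * x ^ (j - i)" using 1 by (simp add: power_add[symmetric])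
        then have "x ^ (j - i) = 1" using ij(3) assms(2) by simp
        moreover have "j - i < p" "0 < j - i" using 1 ij by auto
        ultimately show False using pow_ne_one[OF xp pp assms(3), of "j-i"] by blast
      next
        case 2
        have "x ^ i = x ^ j * x ^ (i - j)" using 2 by (simp add: power_add[symmetric])
        then have "x ^ (i - j) = 1" using ij(3) assms(2) by simp
        moreover have "i - j < p" "0 < i - j" using 2 ij by auto
        ultimately show False using pow_ne_one[OF xp pp assms(3), of "i-j"] by blast
      qed
    qed
  qed
  have sub: "(\<lambda>k. x ^ k) ` {..<p} \<subseteq> UNIV - {0}" using assms(2) by auto
  have "card ((\<lambda>k. x ^ k) ` {..<p}) = card (UNIV - {0::'a})"
    using card_image[OF inj] p_def by (simp add: card_Diff_subset)
  then have eq: "(\<lambda>k. x ^ k) ` {..<p} = UNIV - {0}"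
    using card_subset_eq[OF _ sub] by simp
  show ?thesis unfolding primitive_element_def
  proof (intro conjI allI impI)
    fix y :: 'a assume "y \<noteq> 0"
    then have "y \<in> (\<lambda>k. x ^ k) ` {..<p}" using eq by auto
    then show "\<exists>k. y = x ^ k" by auto
  qed (use assms in auto)
qed

lemma sq_add_char2:
  fixes a b :: "'a::field"
  assumes "(1::'a) + 1 = 0"
  shows "(a + b) ^ 2 = a ^ 2 + b ^ 2"
proof -
  have "(a + b) ^ 2 = a ^ 2 + b ^ 2 + (1 + 1) * a * b" by (simp add: power2_eq_square algebra_simps)
  then show ?thesis using assms by simp
qed

lemma sq_sum_char2:
  fixes f :: "'b \<Rightarrow> 'a::field"
  assumes "(1::'a) + 1 = 0"
  shows "(sum f A) ^ 2 = sum (\<lambda>i. (f i) ^ 2) A"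
proof (induction A rule: infinite_finite_induct)
  case (insert x F)
  then show ?case using sq_add_char2[OF assms] by simp
qed simp_all

theorem lemma6p1:
  fixes n :: nat and a :: "'a::{field,finite}"
  assumes "n > 0"
    and "prime (2 ^ n - 1 :: nat)"
    and "(2 ^ n - 1 :: nat) \<ge> 7"
    and "CARD('a) = 2 ^ n"
    and "a = 0 \<or> a = 1"
  shows "\<exists>\<alpha>::'a. primitive_element \<alpha> \<and> primitive_element (\<alpha> + inverse \<alpha>) \<and> trace2 n \<alpha> = a"
proof -
  define p where "p = (2 ^ n - 1 :: nat)"
  have pp: "prime p" using assms(2) p_def by simp
  have pC: "CARD('a) - 1 = p" using assms(4) p_def by simp
  have odd: "odd p" unfolding p_def using assms(1) by simp
  have fer: "\<And>x::'a. x \<noteq> 0 \<Longrightarrow> x ^ p = 1" using fermat_field pC by metis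
  have "(-1::'a) ^ p = -1" using odd by simp
  then have m1: "(-1::'a) = 1" using fer[of "-1"] by simp
  then have ch: "(1::'a) + 1 = 0" by (metis add.right_inverse)
  have frob: "\<And>x::'a. x ^ (2 ^ n) = x"
  proof -
    fix x :: 'a
    show "x ^ (2 ^ n) = x"
    proof (cases "x = 0")
      case True then show ?thesis by simp
    next
      case False
      have "(2::nat) ^ n = Suc p" unfolding p_def by simp
      then have "x ^ (2 ^ n) = x ^ p * x" by (simp add: power_Suc2)
      then show ?thesis using fer[OF False] by simp
    qed
  qed
  have tr01: "\<And>x::'a. trace2 n x = 0 \<or> trace2 n x = 1"
  proof -
    fix x :: 'a
    let ?g = "\<lambda>i. x ^ (2 ^ i)"
    have "(trace2 n x) ^ 2 = (\<Sum>i<n. (?g i) ^ 2)"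
      unfolding trace2_def by (rule sq_sum_char2[OF ch])
    also have "\<dots> = (\<Sum>i<n. ?g (Suc i))"
      by (simp add: power_mult[symmetric] mult.commute)
    also have "\<dots> = (\<Sum>i<Suc n. ?g i) - ?g 0"
      using sum.lessThan_Suc_shift[of ?g n] by (metis add_diff_cancel_left')
    also have "\<dots> = (\<Sum>i<n. ?g i) + ?g n - ?g 0"
      by (simp only: sum.lessThan_Suc)
    also have "\<dots> = trace2 n x"
      unfolding trace2_def using frob[of x] by (simp only: power_0 power_one_right add_diff_cancel_right')
    finally have "(trace2 n x) ^ 2 = trace2 n x" .
    then have "trace2 n x * (trace2 n x - 1) = 0" by (simp add: power2_eq_square algebra_simps)
    then show "trace2 n x = 0 \<or> trace2 n x = 1" by simp
  qed
  define k where "k = (2::nat) ^ (n - 1)"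
  have nk: "(2::nat) ^ n = 2 * k" unfolding k_def using assms(1)
    by (cases n) simp_all
  have "2 * k - 1 \<ge> (7::nat)" using assms(3) unfolding nk .
  then have k4: "k \<ge> 4" by simp
  have cardA: "\<And>b::'a. card {x. trace2 n x = b} \<le> k"
  proof -
    fix b :: 'a
    define P where "P = (\<Sum>i<n. monom (1::'a) (2 ^ i)) - [:b:]"
    have evalP: "\<And>x. poly P x = trace2 n x - b"
      unfolding P_def trace2_def by (simp add: poly_sum poly_monom)
    have degP: "degree P \<le> k"
      unfolding P_def
    proof (rule degree_diff_le)
      show "degree (\<Sum>i<n. monom (1::'a) (2 ^ i)) \<le> k"
      proof (rule degree_sum_le)
        fix i assume "i \<in> {..<n}"
        then have "(2::nat) ^ i \<le> k" unfolding k_def by (intro power_increasing) auto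
        then show "degree (monom (1::'a) (2 ^ i)) \<le> k" by (simp add: degree_monom_eq)
      qed simp
    qed simp
    have "k \<noteq> 0" using k4 by simp
    then have c0: "coeff [:b:] k = 0" by (cases k) auto
    have "coeff (\<Sum>i<n. monom (1::'a) (2 ^ i)) k = (\<Sum>i<n. if i = n - 1 then 1 else 0)"
      unfolding coeff_sum coeff_monom k_def by (intro sum.cong) (auto simp: power_inject_exp)
    also have "\<dots> = 1" using assms(1) by simp
    finally have "coeff P k = 1" unfolding P_def using c0 by simp
    then have "P \<noteq> 0" by auto
    then have "card {x. poly P x = 0} \<le> degree P" by (rule card_poly_roots_bound)
    moreover have "{x. poly P x = 0} = {x. trace2 n x = b}" using evalP by auto
    ultimately show "card {x. trace2 n x = b} \<le> k" using degP by simp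
  qed
  define A where "A = {x::'a. trace2 n x = a}"
  define B where "B = {x::'a. trace2 n x = 1 - a}"
  have "UNIV = A \<union> B"
  proof (intro set_eqI iffI)
    fix x :: 'a
    have "trace2 n x = 0 \<or> trace2 n x = 1" by (rule tr01)
    then show "x \<in> A \<union> B" using assms(5) unfolding A_def B_def by auto
  qed simp
  then have "CARD('a) \<le> card A + card B" by (metis card_Un_le)
  then have "card A \<ge> k" using cardA[of "1-a"] assms(4) nk unfolding B_def by linarith
  then have "card A > 2" using k4 by linarith
  have "\<not> A \<subseteq> {0, 1}"
  proof
    assume "A \<subseteq> {0,1}"
    then have "card A \<le> card {0::'a, 1}" by (intro card_mono) auto
    also have "\<dots> \<le> 2" by (simp add: card_insert_le_m1)
    finally show False using \<open>card A > 2\<close> by simp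
  qed
  then obtain \<alpha> where al: "\<alpha> \<in> A" "\<alpha> \<noteq> 0" "\<alpha> \<noteq> 1" by auto
  have p3: "3 < p" using assms(3) p_def pp
    using assms(3) p_def by simp
  have xp: "\<alpha> ^ p = 1" using fer al by simp
  have prim1: "primitive_element \<alpha>" using primitive_prime pC pp al by metis
  have ne0: "\<alpha> + inverse \<alpha> \<noteq> 0"
  proof
    assume h: "\<alpha> + inverse \<alpha> = 0"
    then have "\<alpha> * \<alpha> + 1 = 0" using al(2) by (simp add: field_simps)
    then have "\<alpha> ^ 2 = -1" by (simp add: power2_eq_square eq_neg_iff_add_eq_0)
    then have "\<alpha> ^ 2 = 1" using m1 by simp
    then show False using pow_ne_one[OF xp pp al(3), of 2] p3 by simp
  qed
  have ne1: "\<alpha> + inverse \<alpha> \<noteq> 1"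
  proof
    assume h: "\<alpha> + inverse \<alpha> = 1"
    then have e: "\<alpha> * \<alpha> + 1 = \<alpha>" using al(2) by (simp add: field_simps)
    have "\<alpha> ^ 3 = \<alpha> * (\<alpha> * \<alpha>)" by (simp add: power3_eq_cube)
    also have "\<dots> = \<alpha> * (\<alpha> - 1)" using e by (metis add_diff_cancel_right')
    also have "\<dots> = \<alpha> * \<alpha> - \<alpha>" by (simp add: algebra_simps)
    also have "\<dots> = (\<alpha> * \<alpha> + 1) - \<alpha> - 1" by simp
    also have "\<dots> = -1" using e by simp
    finally have "\<alpha> ^ 3 = 1" using m1 by simp
    then show False using pow_ne_one[OF xp pp al(3), of 3] p3 by simp
  qed
  have prim2: "primitive_element (\<alpha> + inverse \<alpha>)" using primitive_prime pC pp ne0 ne1 by metis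
  show ?thesis using prim1 prim2 al(1) unfolding A_def by blast
qed

end
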